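(* Let $(\mathsf P,\mathcal O)$ be a semitopology and $p\in\mathsf P$. Then $p$ is regular if and only if $p$ is weakly regular and unconflicted.
   Context: A semitopology is a pair $(\mathsf P,\mathcal O)$ where $\mathsf P$ is a set and $\mathcal O\subseteq\mathcal P(\mathsf P)$ contains $\varnothing$ and $\mathsf P$ and is closed under arbitrary unions. Write $X\between Y$ when $X\cap Y\neq\varnothing$. $T$ is topen when it is nonempty, open, and for all open $O,O'$, $O\between T\between O'$ implies $O\between O'$. Points $p,p'$ are intertwined (written $p\between p'$) when every open set containing $p$ intersects every open set containing $p'$; $I(p)$ is the set of points intertwined with $p$; $K(p)=\mathrm{int}(I(p))$ where $\mathrm{int}(R)$ is the union of all open subsets of $R$. $p$ is regular when $p\in K(p)$ and $K(p)$ is topen; weakly regular when $p\in K(p)$. $p$ is unconflicted when for all $p',p''$, $p'\between p$ and $p\between p''$ imply $p'\between p''$ (otherwise $p$ is conflicted). *)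

theory Defs
  imports Main
begin

definition semitopology :: "'a set \<Rightarrow> 'a set set \<Rightarrow> bool" where
  "semitopology P Opens \<longleftrightarrow> (\<forall>X\<in>Opens. X \<subseteq> P) \<and> {} \<in> Opens \<and> P \<in> Opens \<and>
     (\<forall>S. S \<subseteq> Opens \<longrightarrow> \<Union>S \<in> Opens)"

definition meets :: "'a set \<Rightarrow> 'a set \<Rightarrow> bool" where
  "meets X Y \<longleftrightarrow> X \<inter> Y \<noteq> {}"

definition topen :: "'a set set \<Rightarrow> 'a set \<Rightarrow> bool" where
  "topen Opens T \<longleftrightarrow> T \<noteq> {} \<and> T \<in> Opens \<and>
     (\<forall>A\<in>Opens. \<forall>B\<in>Opens. meets A T \<and> meets T B \<longrightarrow> meets A B)"

definition intertwined :: "'a set set \<Rightarrow> 'a \<Rightarrow> 'a \<Rightarrow> bool" where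
  "intertwined Opens p q \<longleftrightarrow> (\<forall>A\<in>Opens. \<forall>B\<in>Opens. p \<in> A \<and> q \<in> B \<longrightarrow> meets A B)"

definition intertwined_set :: "'a set \<Rightarrow> 'a set set \<Rightarrow> 'a \<Rightarrow> 'a set" where
  "intertwined_set P Opens p = {q \<in> P. intertwined Opens p q}"

definition interior_of :: "'a set set \<Rightarrow> 'a set \<Rightarrow> 'a set" where
  "interior_of Opens R = \<Union>{A \<in> Opens. A \<subseteq> R}"

definition community :: "'a set \<Rightarrow> 'a set set \<Rightarrow> 'a \<Rightarrow> 'a set" where
  "community P Opens p = interior_of Opens (intertwined_set P Opens p)"

definition regular_pt :: "'a set \<Rightarrow> 'a set set \<Rightarrow> 'a \<Rightarrow> bool" where
  "regular_pt P Opens p \<longleftrightarrow> p \<in> community P Opens p \<and> topen Opens (community P Opens p)"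

definition weakly_regular_pt :: "'a set \<Rightarrow> 'a set set \<Rightarrow> 'a \<Rightarrow> bool" where
  "weakly_regular_pt P Opens p \<longleftrightarrow> p \<in> community P Opens p"

definition unconflicted :: "'a set \<Rightarrow> 'a set set \<Rightarrow> 'a \<Rightarrow> bool" where
  "unconflicted P Opens p \<longleftrightarrow> (\<forall>q\<in>P. \<forall>r\<in>P.
     intertwined Opens q p \<and> intertwined Opens p r \<longrightarrow> intertwined Opens q r)"

end

theory Submission
  imports Defs
begin

lemma intertwined_sym: "intertwined Os p q \<Longrightarrow> intertwined Os q p"
  unfolding intertwined_def meets_def by blast

theorem theorem5p28:
  fixes P :: "'a set" and Opens :: "'a set set" and p :: 'a
  assumes "semitopology P Opens" and "p \<in> P"
  shows "regular_pt P Opens p \<longleftrightarrow> weakly_regular_pt P Opens p \<and> unconflicted P Opens p"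
proof -
  let ?K = "community P Opens p"
  have Kopen: "?K \<in> Opens"
  proof -
    have "{A \<in> Opens. A \<subseteq> intertwined_set P Opens p} \<subseteq> Opens" by blast
    thus ?thesis using assms(1) unfolding semitopology_def community_def interior_of_def by blast
  qed
  have KI: "\<And>x. x \<in> ?K \<Longrightarrow> x \<in> P \<and> intertwined Opens p x"
    unfolding community_def interior_of_def intertwined_set_def by blast
  show ?thesis
  proof
    assume r: "regular_pt P Opens p"
    hence pK: "p \<in> ?K" and T: "topen Opens ?K" by (auto simp: regular_pt_def)
    have "unconflicted P Opens p"
      unfolding unconflicted_def
    proof (intro ballI impI allI, elim conjE)
      fix q s assume "q \<in> P" "s \<in> P" and qp: "intertwined Opens q p" and ps: "intertwined Opens p s"
      show "intertwined Opens q s"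
        unfolding intertwined_def
      proof (intro ballI impI, elim conjE)
        fix A B assume A: "A \<in> Opens" and B: "B \<in> Opens" and "q \<in> A" "s \<in> B"
        have "meets A ?K" using qp A Kopen \<open>q \<in> A\<close> pK unfolding intertwined_def by simp
        moreover have "meets ?K B" using ps B Kopen \<open>s \<in> B\<close> pK unfolding intertwined_def by simp
        ultimately show "meets A B" using T A B unfolding topen_def by blast
      qed
    qed
    thus "weakly_regular_pt P Opens p \<and> unconflicted P Opens p"
      using pK by (simp add: weakly_regular_pt_def)
  next
    assume h: "weakly_regular_pt P Opens p \<and> unconflicted P Opens p"
    hence pK: "p \<in> ?K" and U: "unconflicted P Opens p"
      by (auto simp: weakly_regular_pt_def)
    have "topen Opens ?K"
      unfolding topen_def
    proof (intro conjI ballI impI)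
      show "?K \<noteq> {}" using pK by blast
      show "?K \<in> Opens" by (rule Kopen)
      fix A B assume A: "A \<in> Opens" and B: "B \<in> Opens" and m: "meets A ?K \<and> meets ?K B"
      from m have m1: "A \<inter> ?K \<noteq> {}" and m2: "?K \<inter> B \<noteq> {}" by (simp_all add: meets_def)
      from m1 obtain x where x: "x \<in> A" "x \<in> ?K" by (meson IntE ex_in_conv)
      from m2 obtain y where y: "y \<in> B" "y \<in> ?K" by (meson IntE ex_in_conv)
      have kx: "x \<in> P" "intertwined Opens p x" using KI[OF x(2)] by auto
      have ky: "y \<in> P" "intertwined Opens p y" using KI[OF y(2)] by auto
      have xp: "intertwined Opens x p" by (rule intertwined_sym[OF kx(2)])
      have "intertwined Opens x y"
        using U kx(1) ky(1) xp ky(2) unfolding unconflicted_def by blast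
      thus "meets A B" using A B x(1) y(1) unfolding intertwined_def by blast
    qed
    thus "regular_pt P Opens p" using pK by (simp add: regular_pt_def)
  qed
qed

end
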